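(* Let $G=(V,E,w)$ be a connected weighted multigraph, let $S\subseteq V$, and let $\psi=\max_{v\in V}d(v,S)$. Then for every $x\in S$ and every $l\ge0$, \[ \mathrm{rad}_{C_S(l,x)}(x)\le \psi+2l, \] i.e. every vertex of $C_S(l,x)$ is within distance $\psi+2l$ of $x$ in the subgraph induced by $C_S(l,x)$.
   Context: Edge lengths are $d(e)=1/w(e)$; $d(u,S)$ is the shortest-path distance in $G$ from $u$ to $S$. $F(S)=\{(u\to v): (u,v)\in E,\ d(u,S)+d(u,v)=d(v,S)\}$ is the set of (directed) forward edges induced by $S$. The cone $C_S(l,x)$ is the set of vertices reachable from $x$ by a path in $G$ such that the sum of the lengths of traversed edges that are not traversed as forward edges of $F(S)$ is at most $l$. For $U\subseteq V$, $\mathrm{rad}_U(x)$ is the smallest $r$ such that every vertex of $U$ is within distance $r$ of $x$ in the induced subgraph $G(U)$. *)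

theory Defs
  imports Complex_Main "HOL-Library.Extended_Real"
begin

text \<open>A weighted multigraph is given by a vertex set V, an edge-identifier set E,
an endpoint map ends (an undirected edge e joins fst (ends e) and snd (ends e)),
and a weight w.
A traversal is a triple (u, e, v): edge e traversed from u to v.\<close>

definition edge_len :: "('e \<Rightarrow> real) \<Rightarrow> 'e \<Rightarrow> real" where
  "edge_len w e = 1 / w e"

definition traversal :: "'e set \<Rightarrow> ('e \<Rightarrow> 'v \<times> 'v) \<Rightarrow> 'v \<Rightarrow> 'e \<Rightarrow> 'v \<Rightarrow> bool" where
  "traversal E ends u e v \<longleftrightarrow> e \<in> E \<and> (ends e = (u, v) \<or> ends e = (v, u))"

fun walk :: "'e set \<Rightarrow> ('e \<Rightarrow> 'v \<times> 'v) \<Rightarrow> 'v set \<Rightarrow> 'v \<Rightarrow> ('v \<times> 'e \<times> 'v) list \<Rightarrow> 'v \<Rightarrow> bool" where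
  "walk E ends W x [] y \<longleftrightarrow> x = y \<and> x \<in> W"
| "walk E ends W x ((u, e, v) # p) y \<longleftrightarrow>
     u = x \<and> x \<in> W \<and> traversal E ends u e v \<and> walk E ends W v p y"

definition walk_len :: "('e \<Rightarrow> real) \<Rightarrow> ('v \<times> 'e \<times> 'v) list \<Rightarrow> real" where
  "walk_len w p = (\<Sum>(u, e, v) \<leftarrow> p. edge_len w e)"

text \<open>Shortest-path distance in the subgraph induced by W (infinite if no walk).\<close>
definition dist_in :: "'e set \<Rightarrow> ('e \<Rightarrow> 'v \<times> 'v) \<Rightarrow> ('e \<Rightarrow> real) \<Rightarrow> 'v set \<Rightarrow> 'v \<Rightarrow> 'v \<Rightarrow> ereal" where
  "dist_in E ends w W x y = (INF p \<in> {p. walk E ends W x p y}. ereal (walk_len w p))"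

definition dist_set :: "'v set \<Rightarrow> 'e set \<Rightarrow> ('e \<Rightarrow> 'v \<times> 'v) \<Rightarrow> ('e \<Rightarrow> real) \<Rightarrow> 'v \<Rightarrow> 'v set \<Rightarrow> ereal" where
  "dist_set V E ends w u S = (INF s \<in> S. dist_in E ends w V u s)"

definition forward :: "'v set \<Rightarrow> 'e set \<Rightarrow> ('e \<Rightarrow> 'v \<times> 'v) \<Rightarrow> ('e \<Rightarrow> real) \<Rightarrow> 'v set \<Rightarrow> 'v \<Rightarrow> 'e \<Rightarrow> 'v \<Rightarrow> bool" where
  "forward V E ends w S u e v \<longleftrightarrow>
     traversal E ends u e v \<and>
     dist_set V E ends w u S + ereal (edge_len w e) = dist_set V E ends w v S"

definition nonforward_len :: "'v set \<Rightarrow> 'e set \<Rightarrow> ('e \<Rightarrow> 'v \<times> 'v) \<Rightarrow> ('e \<Rightarrow> real) \<Rightarrow> 'v set \<Rightarrow> ('v \<times> 'e \<times> 'v) list \<Rightarrow> real" where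
  "nonforward_len V E ends w S p =
     (\<Sum>(u, e, v) \<leftarrow> p. if forward V E ends w S u e v then 0 else edge_len w e)"

definition cone :: "'v set \<Rightarrow> 'e set \<Rightarrow> ('e \<Rightarrow> 'v \<times> 'v) \<Rightarrow> ('e \<Rightarrow> real) \<Rightarrow> 'v set \<Rightarrow> real \<Rightarrow> 'v \<Rightarrow> 'v set" where
  "cone V E ends w S l x =
     {y. \<exists>p. walk E ends V x p y \<and> nonforward_len V E ends w S p \<le> l}"

definition rad :: "'e set \<Rightarrow> ('e \<Rightarrow> 'v \<times> 'v) \<Rightarrow> ('e \<Rightarrow> real) \<Rightarrow> 'v set \<Rightarrow> 'v \<Rightarrow> ereal" where
  "rad E ends w U x = (SUP y \<in> U. dist_in E ends w U x y)"

definition weighted_multigraph :: "'v set \<Rightarrow> 'e set \<Rightarrow> ('e \<Rightarrow> 'v \<times> 'v) \<Rightarrow> ('e \<Rightarrow> real) \<Rightarrow> bool" where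
  "weighted_multigraph V E ends w \<longleftrightarrow> finite V \<and> finite E \<and>
     (\<forall>e \<in> E. fst (ends e) \<in> V \<and> snd (ends e) \<in> V \<and> w e > 0)"

definition connected_mg :: "'v set \<Rightarrow> 'e set \<Rightarrow> ('e \<Rightarrow> 'v \<times> 'v) \<Rightarrow> bool" where
  "connected_mg V E ends \<longleftrightarrow> (\<forall>u \<in> V. \<forall>v \<in> V. \<exists>p. walk E ends V u p v)"

end

theory Submission
  imports Defs
begin

lemma walk_in_V: "walk E ends W x p y \<Longrightarrow> y \<in> W \<and> x \<in> W"
  by (induction p arbitrary: x) auto

lemma walk_append: "walk E ends W x p z \<Longrightarrow> walk E ends W z q y \<Longrightarrow> walk E ends W x (p @ q) y"
  by (induction p arbitrary: x) auto

lemma walk_len_Cons: "walk_len w ((u, e, v) # p) = edge_len w e + walk_len w p"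
  by (simp add: walk_len_def)

lemma nf_Cons: "nonforward_len V E ends w S ((u, e, v) # p) =
   (if forward V E ends w S u e v then 0 else edge_len w e) + nonforward_len V E ends w S p"
  by (simp add: nonforward_len_def)

lemma nf_append: "nonforward_len V E ends w S (p @ q) =
   nonforward_len V E ends w S p + nonforward_len V E ends w S q"
  by (simp add: nonforward_len_def)

lemma edge_len_pos:
  assumes "weighted_multigraph V E ends w" "e \<in> E" shows "edge_len w e > 0"
  using assms by (auto simp: weighted_multigraph_def edge_len_def)

lemma nf_nonneg:
  assumes "weighted_multigraph V E ends w" "walk E ends W x p y"
  shows "nonforward_len V E ends w S p \<ge> 0"
  using assms(2)
proof (induction p arbitrary: x)
  case Nil then show ?case by (simp add: nonforward_len_def)
next
  case (Cons a p)
  obtain u e v where a: "a = (u, e, v)" by (cases a) auto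
  with Cons have "e \<in> E" "walk E ends W v p y" by (auto simp: traversal_def)
  with Cons.IH edge_len_pos[OF assms(1) \<open>e \<in> E\<close>] show ?case
    by (simp add: a nf_Cons)
qed

lemma len_nonneg:
  assumes "weighted_multigraph V E ends w" "walk E ends W x p y"
  shows "walk_len w p \<ge> 0"
  using assms(2)
proof (induction p arbitrary: x)
  case Nil then show ?case by (simp add: walk_len_def)
next
  case (Cons a p)
  obtain u e v where a: "a = (u, e, v)" by (cases a) auto
  with Cons have "e \<in> E" "walk E ends W v p y" by (auto simp: traversal_def)
  with Cons.IH edge_len_pos[OF assms(1) \<open>e \<in> E\<close>] show ?case
    by (simp add: a walk_len_Cons)
qed

lemma dist_in_nonneg:
  assumes "weighted_multigraph V E ends w"
  shows "dist_in E ends w W x y \<ge> 0"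
  unfolding dist_in_def
  by (rule INF_greatest) (use len_nonneg[OF assms] in auto)

lemma dist_set_nonneg:
  assumes "weighted_multigraph V E ends w"
  shows "dist_set V E ends w x S \<ge> 0"
  unfolding dist_set_def
  by (rule INF_greatest) (use dist_in_nonneg[OF assms] in auto)

lemma dist_set_self:
  assumes "weighted_multigraph V E ends w" "x \<in> S" "S \<subseteq> V"
  shows "dist_set V E ends w x S = 0"
proof -
  have "dist_in E ends w V x x \<le> 0"
    unfolding dist_in_def
    by (rule INF_lower2[of "[]"]) (use assms in \<open>auto simp: walk_len_def\<close>)
  then have "dist_set V E ends w x S \<le> 0"
    unfolding dist_set_def by (meson INF_lower2 assms(2))
  with dist_set_nonneg[OF assms(1)] show ?thesis by (meson antisym)
qed

lemma triangle:
  assumes "traversal E ends u e v" "v \<in> V"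
  shows "dist_set V E ends w v S \<le> dist_set V E ends w u S + ereal (edge_len w e)"
proof -
  let ?c = "ereal (edge_len w e)"
  have abs: "\<bar>?c\<bar> \<noteq> \<infinity>" by simp
  have "dist_set V E ends w v S - ?c \<le> dist_in E ends w V u s" if s: "s \<in> S" for s
    unfolding dist_in_def
  proof (rule INF_greatest)
    fix p assume "p \<in> {p. walk E ends V u p s}"
    then have "walk E ends V v ((v, e, u) # p) s"
      using assms by (auto simp: traversal_def)
    then have "dist_in E ends w V v s \<le> ereal (walk_len w ((v, e, u) # p))"
      unfolding dist_in_def by (metis (mono_tags, lifting) INF_lower mem_Collect_eq)
    moreover have "dist_set V E ends w v S \<le> dist_in E ends w V v s"
      unfolding dist_set_def using s by (rule INF_lower)
    ultimately have "dist_set V E ends w v S \<le> ereal (walk_len w p) + ?c"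
      by (simp add: walk_len_Cons add.commute)
    then show "dist_set V E ends w v S - ?c \<le> ereal (walk_len w p)"
      using ereal_minus_le[OF abs] by blast
  qed
  then have "dist_set V E ends w v S - ?c \<le> dist_set V E ends w u S"
    unfolding dist_set_def[of V E ends w u S] by (rule INF_greatest)
  then show ?thesis using ereal_minus_le[OF abs] by blast
qed

lemma key:
  assumes wm: "weighted_multigraph V E ends w"
    and "walk E ends V x p y"
  shows "ereal (walk_len w p) + dist_set V E ends w x S
          \<le> dist_set V E ends w y S + ereal (2 * nonforward_len V E ends w S p)"
  using assms(2)
proof (induction p arbitrary: x)
  case Nil then show ?case by (simp add: walk_len_def nonforward_len_def)
next
  case (Cons a p)
  obtain u e v where a: "a = (u, e, v)" by (cases a) auto
  with Cons.prems have tr: "traversal E ends x e v" and wp: "walk E ends V v p y" and u: "u = x"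
    and xV: "x \<in> V"
    by auto
  note IH = Cons.IH[OF wp]
  let ?D = "\<lambda>z. dist_set V E ends w z S"
  let ?c = "edge_len w e"
  let ?n = "nonforward_len V E ends w S p"
  have split: "ereal (walk_len w (a # p)) = ereal (walk_len w p) + ereal ?c"
    by (simp add: a walk_len_Cons)
  show ?case
  proof (cases "forward V E ends w S x e v")
    case True
    then have eq: "?D x + ereal ?c = ?D v" by (simp add: forward_def)
    have "ereal (walk_len w (a # p)) + ?D x = ereal (walk_len w p) + (?D x + ereal ?c)"
      by (simp only: split add_ac)
    also have "\<dots> = ereal (walk_len w p) + ?D v" using eq by simp
    also have "\<dots> \<le> ?D y + ereal (2 * ?n)" by (rule IH)
    finally show ?thesis using True by (simp add: a u nf_Cons)
  next
    case False
    have tr': "traversal E ends v e x" using tr by (auto simp: traversal_def)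
    have two: "ereal (2 * ?c) = ereal ?c + ereal ?c" by simp
    have tri: "?D x \<le> ?D v + ereal ?c" by (rule triangle[OF tr' xV])
    have "ereal (walk_len w (a # p)) + ?D x = ereal (walk_len w p) + ereal ?c + ?D x"
      by (simp only: split)
    also have "\<dots> \<le> ereal (walk_len w p) + ereal ?c + (?D v + ereal ?c)"
      using tri by (intro add_left_mono)
    also have "\<dots> = (ereal (walk_len w p) + ?D v) + ereal (2 * ?c)"
      by (simp only: two add_ac)
    also have "\<dots> \<le> (?D y + ereal (2 * ?n)) + ereal (2 * ?c)"
      using IH by (intro add_right_mono)
    also have "\<dots> = ?D y + ereal (2 * (?c + ?n))"
      by (simp add: add_ac distrib_left)
    finally show ?thesis using False by (simp add: a u nf_Cons)
  qed
qed

lemma walk_in_cone: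
  assumes wm: "weighted_multigraph V E ends w"
    and "walk E ends V z p y" "walk E ends V x q z"
    and "nonforward_len V E ends w S q + nonforward_len V E ends w S p \<le> l"
  shows "walk E ends (cone V E ends w S l x) z p y"
  using assms(2-)
proof (induction p arbitrary: z q)
  case Nil
  then show ?case by (force simp: cone_def nonforward_len_def)
next
  case (Cons a p)
  obtain u e v where a: "a = (u, e, v)" by (cases a) auto
  with Cons.prems have tr: "traversal E ends z e v" and wp: "walk E ends V v p y" and u: "u = z"
    by auto
  have nn: "nonforward_len V E ends w S (a # p) \<ge> 0" using nf_nonneg[OF wm Cons.prems(1)] .
  have zc: "z \<in> cone V E ends w S l x"
    unfolding cone_def using Cons.prems(2) Cons.prems(3) nn by auto
  have "walk E ends V z [(z, e, v)] v"
    using walk_in_V[OF wp] walk_in_V[OF Cons.prems(1)] tr by simp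
  then have wq: "walk E ends V x (q @ [(z, e, v)]) v"
    using Cons.prems(2) walk_append by fast
  have "nonforward_len V E ends w S (q @ [(z, e, v)]) + nonforward_len V E ends w S p \<le> l"
    using Cons.prems(3) by (simp add: a u nf_append nf_Cons nonforward_len_def add_ac)
  from Cons.IH[OF wp wq this] zc tr show ?case by (simp add: a u)
qed

theorem mainTheorem7:
  fixes V :: "'v set" and E :: "'e set" and ends :: "'e \<Rightarrow> 'v \<times> 'v" and w :: "'e \<Rightarrow> real"
    and S :: "'v set" and x :: 'v and l :: real
  assumes "weighted_multigraph V E ends w"
    and "connected_mg V E ends"
    and "S \<subseteq> V"
    and "x \<in> S"
    and "l \<ge> 0"
  shows "rad E ends w (cone V E ends w S l x) x
           \<le> (SUP v \<in> V. dist_set V E ends w v S) + ereal (2 * l)"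
  unfolding rad_def
proof (rule SUP_least)
  fix y assume "y \<in> cone V E ends w S l x"
  then obtain p where wp: "walk E ends V x p y" and nf: "nonforward_len V E ends w S p \<le> l"
    unfolding cone_def by auto
  have xV: "x \<in> V" using assms by auto
  have wc: "walk E ends (cone V E ends w S l x) x p y"
    by (rule walk_in_cone[OF assms(1) wp, where q="[]"]) (use nf xV in \<open>auto simp: nonforward_len_def\<close>)
  have "dist_in E ends w (cone V E ends w S l x) x y \<le> ereal (walk_len w p)"
    unfolding dist_in_def by (rule INF_lower2[of p]) (use wc in auto)
  also have "\<dots> = ereal (walk_len w p) + dist_set V E ends w x S"
    using dist_set_self[OF assms(1) assms(4) assms(3)] by simp
  also have "\<dots> \<le> dist_set V E ends w y S + ereal (2 * nonforward_len V E ends w S p)"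
    by (rule key[OF assms(1) wp])
  also have "\<dots> \<le> (SUP v \<in> V. dist_set V E ends w v S) + ereal (2 * l)"
  proof (rule add_mono)
    show "dist_set V E ends w y S \<le> (SUP v \<in> V. dist_set V E ends w v S)"
      using walk_in_V[OF wp] by (intro SUP_upper) auto
    show "ereal (2 * nonforward_len V E ends w S p) \<le> ereal (2 * l)" using nf by simp
  qed
  finally show "dist_in E ends w (cone V E ends w S l x) x y
        \<le> (SUP v \<in> V. dist_set V E ends w v S) + ereal (2 * l)" .
qed

end
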